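(* Let $a,b,d<0$ and $c\ge c^+$, and let $\{W_n(z)\}_{n\ge0}$ be the normalised sequence defined below. Then $W_3(z)$ has exactly one negative zero. If moreover $W_3(z)$ has a positive real zero lying outside the interval $(x_g^-,x_g^+)$, then: $a>-1$; the quadratic $F(z)=A(z)^2+B(z)$ has a unique positive zero $x_0$; $W_3(z)$ has two zeros lying in the interval $\big(-b/(a+1),\,x_0\big)$; and \[ x_0<x_\Delta^+,\qquad c<\frac{b}{a+1}+\frac{a+1}{b}\,d,\qquad c^-<0 . \]
   Context: Let $a,b,c,d\in\mathbb{R}$ with $ac\ne0$, and put $A(z)=az+b$, $B(z)=cz+d$. The normalised sequence $\{W_n(z)\}_{n\ge0}$ is defined by $W_0(z)=1$, $W_1(z)=z$ and $W_n(z)=A(z)W_{n-1}(z)+B(z)W_{n-2}(z)$ for $n\ge2$. Notation: $\Delta_\Delta=-a^2d+abc+c^2$, $x_\Delta^+=\dfrac{-ab-2c+2\sqrt{\Delta_\Delta}}{a^2}$ (the larger zero of $A(z)^2+4B(z)$); $\Delta_g=(b+c)^2+4d(1-a)$, $x_g^\pm=\dfrac{b+c\pm\sqrt{\Delta_g}}{2(1-a)}$ (zeros of $g(z)=(1-a)z^2-(b+c)z-d$); $c^\pm=\pm2\sqrt{d(a-1)}-b$. *)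

theory Defs
  imports "HOL-Computational_Algebra.Polynomial"
begin

fun W :: "real \<Rightarrow> real \<Rightarrow> real \<Rightarrow> real \<Rightarrow> nat \<Rightarrow> real poly" where
  "W a b c d 0 = 1"
| "W a b c d (Suc 0) = [:0, 1:]"
| "W a b c d (Suc (Suc n)) = [:b, a:] * W a b c d (Suc n) + [:d, c:] * W a b c d n"

definition zero_count :: "real poly \<Rightarrow> real set \<Rightarrow> nat" where
  "zero_count p S = (\<Sum>x \<in> {x \<in> S. poly p x = 0}. order x p)"

definition Delta_Delta :: "real \<Rightarrow> real \<Rightarrow> real \<Rightarrow> real \<Rightarrow> real" where
  "Delta_Delta a b c d = - (a^2 * d) + a * b * c + c^2"

definition x_Delta_plus :: "real \<Rightarrow> real \<Rightarrow> real \<Rightarrow> real \<Rightarrow> real" where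
  "x_Delta_plus a b c d = (- a * b - 2 * c + 2 * sqrt (Delta_Delta a b c d)) / a^2"

definition Delta_g :: "real \<Rightarrow> real \<Rightarrow> real \<Rightarrow> real \<Rightarrow> real" where
  "Delta_g a b c d = (b + c)^2 + 4 * d * (1 - a)"

definition x_g_plus :: "real \<Rightarrow> real \<Rightarrow> real \<Rightarrow> real \<Rightarrow> real" where
  "x_g_plus a b c d = (b + c + sqrt (Delta_g a b c d)) / (2 * (1 - a))"

definition x_g_minus :: "real \<Rightarrow> real \<Rightarrow> real \<Rightarrow> real \<Rightarrow> real" where
  "x_g_minus a b c d = (b + c - sqrt (Delta_g a b c d)) / (2 * (1 - a))"

definition c_plus :: "real \<Rightarrow> real \<Rightarrow> real \<Rightarrow> real" where
  "c_plus a b d = 2 * sqrt (d * (a - 1)) - b"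

definition c_minus :: "real \<Rightarrow> real \<Rightarrow> real \<Rightarrow> real" where
  "c_minus a b d = - 2 * sqrt (d * (a - 1)) - b"

definition F_quad :: "real \<Rightarrow> real \<Rightarrow> real \<Rightarrow> real \<Rightarrow> real \<Rightarrow> real" where
  "F_quad a b c d z = (a * z + b)^2 + (c * z + d)"

end

theory Submission
  imports Defs
begin

lemma W3_poly: "poly (W a b c d 3) x =
  a^2*x^3 + (2*a*b+a*c+c)*x^2 + (a*d+b^2+b*c+d)*x + b*d"
  by (simp add: eval_nat_numeral algebra_simps power2_eq_square power3_eq_cube)

lemma W3_alt: "poly (W a b c d 3) x = x*((a*x+b)^2 + (c*x+d)) + (a*x+b)*(c*x+d)"
  by (simp add: eval_nat_numeral algebra_simps power2_eq_square power3_eq_cube)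

lemma order_lin_self: "order r [:-r, 1:] = (1::nat)"
  using order_power_n_n[of r 1] by simp

lemma order_lin_other: "x \<noteq> r \<Longrightarrow> order x [:-r, 1::real:] = 0"
  by (rule order_0I) simp

lemma NB:
  fixes a b d s :: real
  assumes "a < 0" "b < 0" "d < 0" "s > 0" "s^2 \<ge> 4*d*(a-1)"
  shows "\<not> (b*(a-1)+s*(a+1) > 0 \<and> d*(a+1)+b*s > 0)"
proof
  assume h: "b*(a-1)+s*(a+1) > 0 \<and> d*(a+1)+b*s > 0"
  show False
  proof (cases "a \<ge> -1")
    case True
    have "d*(a+1) \<le> 0" using True assms by (simp add: mult_nonpos_nonneg)
    moreover have "b*s < 0" using assms by (simp add: mult_neg_pos)
    ultimately show False using h by linarith
  next
    case False
    define t where "t = -(a+1)"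
    have t: "t > 0" using False t_def by simp
    have h1: "(-b)*s < (-d)*t" unfolding t_def using h by (simp add: algebra_simps)
    have h2: "s*t < (-b)*(1-a)" unfolding t_def using h by (simp add: algebra_simps)
    have "((-b)*s)*(s*t) < ((-d)*t)*((-b)*(1-a))"
      by (rule mult_strict_mono) (use h1 h2 assms t in \<open>auto simp: mult_neg_pos\<close>)
    hence "((-b)*t)*(s^2) < ((-b)*t)*((-d)*(1-a))"
      by (simp add: power2_eq_square algebra_simps)
    moreover have pos: "(-b)*t > 0" using assms t by (simp add: mult_neg_pos)
    ultimately have "s^2 < (-d)*(1-a)" using mult_less_cancel_left_pos[OF pos] by blast
    moreover have "(-d)*(1-a) > 0" using assms by (simp add: mult_neg_pos)
    ultimately show False using assms(5) by (simp add: algebra_simps)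
  qed
qed

lemma s_facts:
  fixes a b c d :: real
  assumes "a < 0" "b < 0" "d < 0" "c \<ge> c_plus a b d"
  shows "b + c > 0" "(b+c)^2 \<ge> 4*d*(a-1)" "c > 0"
proof -
  define X where "X = d*(a-1)"
  have X: "X > 0" using assms X_def by (simp add: mult_neg_neg)
  have sX: "sqrt X > 0" using X by simp
  have ge: "b + c \<ge> 2 * sqrt X" using assms(4) unfolding c_plus_def X_def by simp
  show "b + c > 0" using ge sX by linarith
  have "(2 * sqrt X)^2 \<le> (b+c)^2" using ge sX by (intro power_mono) auto
  thus "(b+c)^2 \<ge> 4*d*(a-1)" using X by (simp add: power_mult_distrib X_def)
  show "c > 0" using ge sX assms by linarith
qed

lemma cubic_neg:
  fixes k C2 C1 C0 :: real
  assumes "k > 0"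
  shows "\<exists>K>0. k*(-K)^3 + C2*(-K)^2 + C1*(-K) + C0 < 0"
proof -
  define M where "M = \<bar>C2\<bar> + \<bar>C1\<bar> + \<bar>C0\<bar>"
  define K where "K = 1 + M / k"
  have M: "M \<ge> 0" using M_def by simp
  have K1: "K \<ge> 1" using K_def M assms by simp
  have kK: "k*K > M" using K_def assms by (simp add: field_simps)
  have K2: "K^2 \<ge> K" using K1 by (simp add: power2_eq_square)
  have "k*K^3 = (k*K)*K^2" by (simp add: power3_eq_cube power2_eq_square)
  also have "... > M*K^2" using kK K1 by (intro mult_strict_right_mono) auto
  finally have A: "k*K^3 > M*K^2" .
  have "M*K^2 = \<bar>C2\<bar>*K^2 + \<bar>C1\<bar>*K^2 + \<bar>C0\<bar>*K^2" by (simp add: M_def algebra_simps)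
  moreover have "\<bar>C1\<bar>*K^2 \<ge> \<bar>C1\<bar>*K" using K2 by (simp add: mult_left_mono)
  moreover have "\<bar>C0\<bar>*K^2 \<ge> \<bar>C0\<bar>" using mult_left_mono[of 1 "K^2" "\<bar>C0\<bar>"] K1 K2 by simp
  moreover have "C2*K^2 \<le> \<bar>C2\<bar>*K^2" by (simp add: mult_right_mono)
  moreover have "-C1*K \<le> \<bar>C1\<bar>*K" using K1 by (intro mult_right_mono) auto
  moreover have "C0 \<le> \<bar>C0\<bar>" by simp
  ultimately have "C2*K^2 - C1*K + C0 < k*K^3" using A by linarith
  hence "k*(-K)^3 + C2*(-K)^2 + C1*(-K) + C0 < 0" by (simp add: power3_eq_cube power2_eq_square)
  thus ?thesis using K1 by (intro exI[of _ K]) auto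
qed

lemma part1_root:
  fixes a b c d :: real
  assumes "a < 0" "b < 0" "d < 0" "c \<ge> c_plus a b d"
  shows "\<exists>r q0 q1. r < 0 \<and> q0 > 0 \<and> q1 \<le> 0 \<and>
     (\<forall>x. poly (W a b c d 3) x = (x - r) * (q0 + q1*x + a^2*x^2))"
proof -
  define C2 where "C2 = 2*a*b+a*c+c"
  define C1 where "C1 = a*d+b^2+b*c+d"
  define C0 where "C0 = b*d"
  have P: "\<And>x. poly (W a b c d 3) x = a^2*x^3 + C2*x^2 + C1*x + C0"
    unfolding C2_def C1_def C0_def W3_poly by simp
  have a2: "a^2 > 0" using assms by simp
  obtain K where K: "K > 0" "a^2*(-K)^3 + C2*(-K)^2 + C1*(-K) + C0 < 0"
    using cubic_neg[OF a2] by blast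
  have C0: "C0 > 0" using assms C0_def by (simp add: mult_neg_neg)
  obtain r where r: "-K < r" "r < 0" "poly (W a b c d 3) r = 0"
    using poly_IVT_pos[of "-K" 0 "W a b c d 3"] K C0 P by auto
  define q1 where "q1 = C2 + r*a^2"
  define q0 where "q0 = C1 + r*q1"
  have r0: "a^2*r^3 + C2*r^2 + C1*r + C0 = 0" using r P by simp
  have e0: "C0 = - r*q0" using r0 unfolding q0_def q1_def
    by (simp add: algebra_simps power2_eq_square power3_eq_cube)
  have fact: "\<And>x. poly (W a b c d 3) x = (x - r) * (q0 + q1*x + a^2*x^2)"
    unfolding P using e0 unfolding q0_def q1_def
    by (simp add: algebra_simps power2_eq_square power3_eq_cube)
  have q0: "q0 > 0"
  proof -
    have "r*q0 < 0" using e0 C0 by simp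
    thus ?thesis using r(2) by (simp add: mult_less_0_iff)
  qed
  have q1: "q1 \<le> 0"
  proof (rule ccontr)
    assume "\<not> q1 \<le> 0"
    hence q1p: "q1 > 0" by simp
    have "C2 > 0"
    proof -
      have "r*a^2 < 0" using r(2) a2 by (simp add: mult_neg_pos)
      thus ?thesis using q1p q1_def by simp
    qed
    moreover have "C1 > 0"
    proof -
      have "r*q1 < 0" using r(2) q1p by (simp add: mult_neg_pos)
      thus ?thesis using q0 q0_def by simp
    qed
    moreover have "\<not> (b*(a-1)+(b+c)*(a+1) > 0 \<and> d*(a+1)+b*(b+c) > 0)"
      using NB[of a b d "b+c"] s_facts[OF assms] assms by simp
    ultimately show False unfolding C2_def C1_def by (simp add: algebra_simps power2_eq_square)
  qed
  show ?thesis using r(2) q0 q1 fact by blast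
qed

lemma part1_count:
  fixes a b c d :: real
  assumes "a < 0" "b < 0" "d < 0" "c \<ge> c_plus a b d"
  shows "zero_count (W a b c d 3) {..<0} = 1"
proof -
  obtain r q0 q1 where rq: "r < 0" "q0 > 0" "q1 \<le> 0"
    "\<And>x. poly (W a b c d 3) x = (x - r) * (q0 + q1*x + a^2*x^2)"
    using part1_root[OF assms] by blast
  have Peq: "W a b c d 3 = [:-r,1:] * [:q0,q1,a^2:]"
    by (rule poly_eq_poly_eq_iff[THEN iffD1]) (auto simp: rq(4) algebra_simps power2_eq_square)
  have Qpos: "\<And>x. x < 0 \<Longrightarrow> q0 + q1*x + a^2*x^2 > 0"
  proof -
    fix x :: real assume "x < 0"
    hence "q1*x \<ge> 0" using rq(3) by (simp add: mult_nonpos_nonpos)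
    moreover have "a^2*x^2 \<ge> 0" by simp
    ultimately show "q0 + q1*x + a^2*x^2 > 0" using rq(2) by linarith
  qed
  have S: "{x \<in> {..<0}. poly (W a b c d 3) x = 0} = {r}"
  proof (intro equalityI subsetI)
    fix x assume "x \<in> {x \<in> {..<0}. poly (W a b c d 3) x = 0}"
    hence "x < 0" "(x - r) * (q0 + q1*x + a^2*x^2) = 0" using rq(4) by auto
    thus "x \<in> {r}" using Qpos[of x] by auto
  next
    fix x assume "x \<in> {r}"
    thus "x \<in> {x \<in> {..<0}. poly (W a b c d 3) x = 0}" using rq by auto
  qed
  have Qr: "poly [:q0,q1,a^2:] r \<noteq> 0" using Qpos[OF rq(1)] by (simp add: algebra_simps power2_eq_square)
  have Qnz: "[:q0,q1,a^2:] \<noteq> 0" using Qr by auto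
  have Lnz: "[:-r,1:] \<noteq> (0::real poly)" by simp
  have nz: "[:-r,1:] * [:q0,q1,a^2:] \<noteq> 0" using Qnz Lnz by (metis mult_eq_0_iff)
  have "order r (W a b c d 3) = 1"
    unfolding Peq by (subst order_mult[OF nz]) (simp add: order_lin_self order_0I[OF Qr])
  thus ?thesis unfolding zero_count_def S by simp
qed

lemma g_nonneg:
  fixes a b c d z :: real
  assumes "a < 0" "b < 0" "d < 0" "c \<ge> c_plus a b d"
    and "z \<le> x_g_minus a b c d \<or> z \<ge> x_g_plus a b c d"
  shows "z^2 - (a*z+b)*z - (c*z+d) \<ge> 0"
proof -
  define u where "u = 1 - a"
  define s where "s = b + c"
  define sq where "sq = sqrt (Delta_g a b c d)"
  have u: "u > 0" using u_def assms by simp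
  have Dg: "Delta_g a b c d \<ge> 0"
    using s_facts(2)[OF assms(1-4)] unfolding Delta_g_def by (simp add: algebra_simps)
  have sq: "sq \<ge> 0" "sq^2 = s^2 + 4*d*u" using Dg unfolding sq_def Delta_g_def s_def u_def by simp_all
  have xm: "x_g_minus a b c d = (s - sq)/(2*u)" unfolding x_g_minus_def s_def sq_def u_def by simp
  have xp: "x_g_plus a b c d = (s + sq)/(2*u)" unfolding x_g_plus_def s_def sq_def u_def by simp
  have key: "(2*u*z - (s - sq))*(2*u*z - (s+sq)) = 4*u*(z^2 - (a*z+b)*z - (c*z+d))"
    using sq(2) unfolding u_def s_def by (simp add: algebra_simps power2_eq_square)
  have "(2*u*z - (s - sq))*(2*u*z - (s+sq)) \<ge> 0"
  proof (cases "z \<le> x_g_minus a b c d")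
    case True
    hence "2*u*z \<le> s - sq" using u xm by (simp add: le_divide_eq mult.commute)
    hence "2*u*z - (s - sq) \<le> 0" "2*u*z - (s + sq) \<le> 0" using sq(1) by linarith+
    thus ?thesis by (simp add: mult_nonpos_nonpos)
  next
    case False
    hence "z \<ge> x_g_plus a b c d" using assms(5) by simp
    hence "2*u*z \<ge> s + sq" using u xp by (simp add: divide_le_eq mult.commute)
    hence "2*u*z - (s - sq) \<ge> 0" "2*u*z - (s + sq) \<ge> 0" using sq(1) by linarith+
    thus ?thesis by simp
  qed
  hence "4*u*(z^2 - (a*z+b)*z - (c*z+d)) \<ge> 0" using key by simp
  thus ?thesis using u by (simp add: zero_le_mult_iff)
qed

lemma part2_basic:
  fixes a b c d z :: real
  assumes "a < 0" "b < 0" "d < 0" "c \<ge> c_plus a b d"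
    and z: "z > 0" "poly (W a b c d 3) z = 0"
    and zg: "z \<le> x_g_minus a b c d \<or> z \<ge> x_g_plus a b c d"
  shows "a > -1" "c*z+d < 0" "z + (a*z+b) > 0" "c*z+d < - ((a*z+b)^2)" "b^2 + d < 0"
    "-b/(a+1) < z" "F_quad a b c d z < 0"
proof -
  define A where "A = a*z+b"
  define B where "B = c*z+d"
  have eq: "z*A^2 + B*(z+A) = 0" using z(2) unfolding W3_alt A_def B_def by (simp add: algebra_simps)
  have g: "z^2 - A*z - B \<ge> 0" using g_nonneg[OF assms(1-4) zg] A_def B_def by simp
  have A: "A < 0" using assms z A_def by (simp add: mult_neg_pos add_neg_neg)
  have zA2: "z*A^2 > 0" using A z by simp
  have BzA: "B*(z+A) < 0" using eq zA2 by linarith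
  have B: "B < 0"
  proof (rule ccontr)
    assume "\<not> B < 0"
    hence Bp: "B > 0" using BzA by (cases "B = 0") auto
    hence zAn: "z + A < 0" using BzA by (simp add: mult_less_0_iff)
    have "B*(-(z+A)) \<le> (z^2 - A*z)*(-(z+A))" using g zAn by (intro mult_right_mono) auto
    hence "z^3 \<le> 0" using eq by (simp add: algebra_simps power2_eq_square power3_eq_cube)
    thus False using z by simp
  qed
  show "c*z+d < 0" using B B_def by simp
  have zA: "z + A > 0" using BzA B by (simp add: mult_less_0_iff)
  show "z + (a*z+b) > 0" using zA A_def by simp
  have a1z: "(a+1)*z > -b" using zA A_def by (simp add: algebra_simps)
  show a1: "a > -1"
  proof (rule ccontr)
    assume "\<not> a > -1"
    hence "(a+1)*z \<le> 0" using z by (simp add: mult_nonpos_nonneg)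
    thus False using a1z assms by linarith
  qed
  have a1p: "a + 1 > 0" using a1 by simp
  have "-b < z*(a+1)" using a1z by (simp add: mult.commute)
  thus "-b/(a+1) < z" using pos_divide_less_eq[OF a1p, of "-b" z] by blast
  have AA: "A*A > 0" using A by (simp add: mult_neg_neg)
  have A3: "A*(A*A) < 0" using A AA by (rule mult_neg_pos)
  have "B*(z+A) < -(A^2)*(z+A)" using eq zA A A3 by (simp add: algebra_simps power2_eq_square)
  hence BA: "B < -(A^2)" using mult_less_cancel_right_pos[OF zA, of B "-(A^2)"] by simp
  show "c*z+d < - ((a*z+b)^2)" using BA A_def B_def by simp
  have "A < b" using A_def assms z by (simp add: mult_neg_pos)
  hence "(-b)*(-b) < (-A)*(-A)" using assms by (intro mult_strict_mono) auto
  hence bA: "b^2 < A^2" by (simp add: power2_eq_square)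
  have "c*z > 0" using s_facts(3)[OF assms(1-4)] z by simp
  thus "b^2 + d < 0" using BA bA B_def by linarith
  show "F_quad a b c d z < 0" unfolding F_quad_def using BA A_def B_def by simp
qed

lemma F_poly: "F_quad a b c d x = poly [:b^2+d, 2*a*b+c, a^2:] x"
  unfolding F_quad_def by (simp add: algebra_simps power2_eq_square)

lemma F_fact:
  fixes a b c d x0 x :: real
  assumes "x0 > 0" "F_quad a b c d x0 = 0"
  shows "F_quad a b c d x * x0 = (x - x0)*(a^2*x*x0 - (b^2+d))"
proof -
  have h: "(2*a*b+c)*x0 = -(b^2+d) - a^2*x0^2" using assms(2)
    unfolding F_quad_def by (simp add: algebra_simps power2_eq_square)
  have "F_quad a b c d x * x0 = a^2*x^2*x0 + ((2*a*b+c)*x0)*x + (b^2+d)*x0"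
    unfolding F_quad_def by (simp add: algebra_simps power2_eq_square)
  also have "... = a^2*x^2*x0 + (-(b^2+d) - a^2*x0^2)*x + (b^2+d)*x0" by (simp only: h)
  also have "... = (x - x0)*(a^2*x*x0 - (b^2+d))" by (simp add: algebra_simps power2_eq_square)
  finally show ?thesis .
qed

lemma F_sign:
  fixes a b c d x0 x :: real
  assumes "b^2 + d < 0" "x0 > 0" "F_quad a b c d x0 = 0" "x \<ge> 0"
  shows "F_quad a b c d x < 0 \<longleftrightarrow> x < x0" "F_quad a b c d x = 0 \<longleftrightarrow> x = x0"
proof -
  have pos: "a^2*x*x0 - (b^2+d) > 0"
  proof -
    have "a^2*x*x0 \<ge> 0" using assms by simp
    thus ?thesis using assms(1) by linarith
  qed
  have e: "F_quad a b c d x * x0 = (x - x0)*(a^2*x*x0 - (b^2+d))" by (rule F_fact[OF assms(2,3)])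
  have "F_quad a b c d x < 0 \<longleftrightarrow> F_quad a b c d x * x0 < 0" using assms(2) by (simp add: mult_less_0_iff)
  also have "... \<longleftrightarrow> x < x0" unfolding e using pos by (simp add: mult_less_0_iff)
  finally show "F_quad a b c d x < 0 \<longleftrightarrow> x < x0" .
  have "F_quad a b c d x = 0 \<longleftrightarrow> F_quad a b c d x * x0 = 0" using assms(2) by simp
  also have "... \<longleftrightarrow> x = x0" unfolding e using pos by simp
  finally show "F_quad a b c d x = 0 \<longleftrightarrow> x = x0" .
qed

lemma quad_pos:
  fixes k C1 C0 :: real
  assumes "k > 0"
  shows "\<exists>K>0. k*K^2 + C1*K + C0 > 0"
proof -
  define M where "M = \<bar>C1\<bar> + \<bar>C0\<bar>"
  define K where "K = 1 + M / k"
  have M: "M \<ge> 0" using M_def by simp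
  have K1: "K \<ge> 1" using K_def M assms by simp
  have kK: "k*K > M" using K_def assms by (simp add: field_simps)
  have "k*K^2 = (k*K)*K" by (simp add: power2_eq_square)
  also have "... > M*K" using kK K1 by (intro mult_strict_right_mono) auto
  finally have A: "k*K^2 > M*K" .
  have "M*K = \<bar>C1\<bar>*K + \<bar>C0\<bar>*K" by (simp add: M_def algebra_simps)
  moreover have "\<bar>C0\<bar>*K \<ge> \<bar>C0\<bar>" using mult_left_mono[of 1 "K" "\<bar>C0\<bar>"] K1 by simp
  moreover have "-C1*K \<le> \<bar>C1\<bar>*K" using K1 by (intro mult_right_mono) auto
  moreover have "-C0 \<le> \<bar>C0\<bar>" by simp
  ultimately have "k*K^2 + C1*K + C0 > 0" using A by linarith
  thus ?thesis using K1 by (intro exI[of _ K]) auto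
qed

lemma count2:
  fixes a b c d z y x0 :: real
  assumes "a < 0" "b < 0" "d < 0" "c \<ge> c_plus a b d"
    and z: "poly (W a b c d 3) z = 0" "y < z" "z < x0" "y > 0"
    and py: "poly (W a b c d 3) y > 0" and px: "poly (W a b c d 3) x0 > 0"
  shows "zero_count (W a b c d 3) {y<..<x0} = 2"
proof -
  obtain r q0 q1 where rq: "r < 0" "q0 > 0" "q1 \<le> 0"
    "\<And>x. poly (W a b c d 3) x = (x - r) * (q0 + q1*x + a^2*x^2)"
    using part1_root[OF assms(1-4)] by blast
  have a2: "a^2 > 0" using assms by simp
  have Qz: "q0 + q1*z + a^2*z^2 = 0" using z rq by simp
  define z2 where "z2 = -(q1 + z*a^2)/a^2"
  have Qf: "\<And>x. q0 + q1*x + a^2*x^2 = a^2*(x - z)*(x - z2)"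
  proof -
    fix x
    have "a^2*z2 = -(q1 + z*a^2)" unfolding z2_def using a2 by simp
    hence q1e: "q1 = -(a^2*z2) - z*a^2" by simp
    have q0e: "q0 = -q1*z - a^2*z^2" using Qz by simp
    show "q0 + q1*x + a^2*x^2 = a^2*(x - z)*(x - z2)" unfolding q0e unfolding q1e
      by (simp add: algebra_simps power2_eq_square)
  qed
  have Pf: "\<And>x. poly (W a b c d 3) x = a^2*((x - r)*(x - z)*(x - z2))"
  proof -
    fix x
    have "poly (W a b c d 3) x = (x - r) * (q0 + q1*x + a^2*x^2)" by (rule rq(4))
    also have "... = (x - r) * (a^2*(x - z)*(x - z2))" by (simp only: Qf)
    finally show "poly (W a b c d 3) x = a^2*((x - r)*(x - z)*(x - z2))" by (simp add: algebra_simps)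
  qed
  have yr: "y - r > 0" "x0 - r > 0" using rq z by auto
  have "a^2*((y - r)*((y - z)*(y - z2))) > 0" using py Pf[of y] by (simp add: algebra_simps)
  hence "(y - z)*(y - z2) > 0" using a2 yr by (simp add: zero_less_mult_iff)
  hence z2y: "z2 > y" using z by (simp add: zero_less_mult_iff)
  have "a^2*((x0 - r)*((x0 - z)*(x0 - z2))) > 0" using px Pf[of x0] by (simp add: algebra_simps)
  hence "(x0 - z)*(x0 - z2) > 0" using a2 yr by (simp add: zero_less_mult_iff)
  hence z2x: "z2 < x0" using z by (simp add: zero_less_mult_iff)
  have Peq: "W a b c d 3 = [:-r,1:] * ([:-z,1:] * smult (a^2) [:-z2,1:])"
    by (rule poly_eq_poly_eq_iff[THEN iffD1]) (auto simp: Pf algebra_simps)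
  have nz: "[:-r,1:] * ([:-z,1:] * smult (a^2) [:-z2,1:]) \<noteq> 0" using a2
    by (metis mult_eq_0_iff pCons_eq_0_iff smult_eq_0_iff one_neq_zero power_not_zero zero_neq_one less_irrefl)
  have nz2: "[:-z,1:] * smult (a^2) [:-z2,1:] \<noteq> 0" using nz by auto
  have ord: "\<And>x. order x (W a b c d 3) = order x [:-r,1:] + (order x [:-z,1:] + order x [:-z2,1:])"
  proof -
    fix x
    have a2nz: "a^2 \<noteq> 0" using a2 by simp
    show "order x (W a b c d 3) = order x [:-r,1:] + (order x [:-z,1:] + order x [:-z2,1:])"
      unfolding Peq by (simp only: order_mult[OF nz] order_mult[OF nz2] order_smult[OF a2nz])
  qed
  have S: "{x \<in> {y<..<x0}. poly (W a b c d 3) x = 0} = {z, z2}"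
    using z z2y z2x rq(1) a2 by (auto simp: Pf)
  show ?thesis
  proof (cases "z = z2")
    case True
    have "order z (W a b c d 3) = 2" unfolding ord using True rq(1) z
      by (simp add: order_lin_self order_lin_other)
    thus ?thesis unfolding zero_count_def S using True by simp
  next
    case False
    have o1: "order z (W a b c d 3) = 1" unfolding ord using False rq(1) z
      by (simp add: order_lin_self order_lin_other)
    have o2: "order z2 (W a b c d 3) = 1" unfolding ord using False rq(1) z z2y
      by (simp add: order_lin_self order_lin_other)
    show ?thesis unfolding zero_count_def S using False o1 o2 by simp
  qed
qed

lemma xDelta_bound:
  fixes a b c d x1 :: real
  assumes "a < 0" "b < 0" "x1 > 0" "F_quad a b c d x1 = 0"
  shows "x1 < x_Delta_plus a b c d"
proof -
  define A where "A = a*x1+b"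
  define B where "B = c*x1+d"
  define u where "u = a^2*x1 + a*b + 2*c"
  define D where "D = Delta_Delta a b c d"
  have A: "A < 0" using assms A_def by (simp add: mult_neg_pos add_neg_neg)
  have B: "B = -(A^2)" using assms(4) unfolding F_quad_def A_def B_def by simp
  have id: "u^2 - 4*D = a^2*(A^2 + 4*B)" unfolding u_def D_def Delta_Delta_def A_def B_def
    by (simp add: algebra_simps power2_eq_square)
  have "a^2*(A^2 + 4*B) < 0" using B A assms(1) by (simp add: mult_pos_neg)
  hence "u^2 < 4*D" using id by linarith
  hence "u < sqrt (4*D)" by (rule real_less_rsqrt)
  hence "u < 2*sqrt D" by (simp add: real_sqrt_mult)
  hence "x1*a^2 < - a * b - 2 * c + 2 * sqrt D" unfolding u_def by (simp add: algebra_simps)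
  moreover have a2: "a^2 > 0" using assms by simp
  ultimately show ?thesis unfolding x_Delta_plus_def D_def using pos_less_divide_eq[OF a2] by blast
qed

theorem theorem4p3:
  fixes a b c d :: real
  assumes "a < 0" and "b < 0" and "d < 0"
    and "c \<ge> c_plus a b d"
  shows "zero_count (W a b c d 3) {..<0} = 1 \<and>
    ((\<exists>z>0. poly (W a b c d 3) z = 0 \<and>
        (z \<le> x_g_minus a b c d \<or> z \<ge> x_g_plus a b c d)) \<longrightarrow>
      a > -1 \<and>
      (\<exists>!x0. x0 > 0 \<and> F_quad a b c d x0 = 0) \<and>
      (\<forall>x0. x0 > 0 \<and> F_quad a b c d x0 = 0 \<longrightarrow>
         zero_count (W a b c d 3) {- b / (a + 1)<..<x0} = 2 \<and>
         x0 < x_Delta_plus a b c d) \<and>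
      c < b / (a + 1) + (a + 1) / b * d \<and>
      c_minus a b d < 0)"
proof -
  have P1: "zero_count (W a b c d 3) {..<0} = 1" by (rule part1_count[OF assms])
  have P2: "(\<exists>z>0. poly (W a b c d 3) z = 0 \<and>
        (z \<le> x_g_minus a b c d \<or> z \<ge> x_g_plus a b c d)) \<longrightarrow>
      a > -1 \<and>
      (\<exists>!x0. x0 > 0 \<and> F_quad a b c d x0 = 0) \<and>
      (\<forall>x0. x0 > 0 \<and> F_quad a b c d x0 = 0 \<longrightarrow>
         zero_count (W a b c d 3) {- b / (a + 1)<..<x0} = 2 \<and>
         x0 < x_Delta_plus a b c d) \<and>
      c < b / (a + 1) + (a + 1) / b * d \<and>
      c_minus a b d < 0"
  proof
    assume "\<exists>z>0. poly (W a b c d 3) z = 0 \<and>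
        (z \<le> x_g_minus a b c d \<or> z \<ge> x_g_plus a b c d)"
    then obtain z where z: "z > 0" "poly (W a b c d 3) z = 0"
        "z \<le> x_g_minus a b c d \<or> z \<ge> x_g_plus a b c d" by blast
    note Bs = part2_basic[OF assms z]
    have a1: "a > -1" by (rule Bs(1))
    have a1p: "a + 1 > 0" using a1 by simp
    have g0: "b^2 + d < 0" by (rule Bs(5))
    have Fz: "F_quad a b c d z < 0" by (rule Bs(7))
    define y where "y = -b/(a+1)"
    have yz: "y < z" using Bs(6) y_def by simp
    have ypos: "y > 0" using y_def a1p assms by (simp add: divide_neg_pos)
    have Ay: "a*y + b = -y" using a1p unfolding y_def by (simp add: field_simps)
    have a2: "a^2 > 0" using assms by simp
    obtain K where K: "K > 0" "a^2*K^2 + (2*a*b+c)*K + (b^2+d) > 0"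
      using quad_pos[OF a2] by blast
    obtain x0 where x0: "0 < x0" "x0 < K" "poly [:b^2+d, 2*a*b+c, a^2:] x0 = 0"
      using poly_IVT_pos[of 0 K "[:b^2+d, 2*a*b+c, a^2:]"] K g0
      by (auto simp: algebra_simps power2_eq_square)
    have Fx0: "F_quad a b c d x0 = 0" using x0(3) F_poly by simp
    have ex1: "\<exists>!x0. x0 > 0 \<and> F_quad a b c d x0 = 0"
    proof (rule ex1I[of _ x0])
      show "x0 > 0 \<and> F_quad a b c d x0 = 0" using x0 Fx0 by simp
    next
      fix x assume "x > 0 \<and> F_quad a b c d x = 0"
      thus "x = x0" using F_sign(2)[OF g0 x0(1) Fx0, of x] by simp
    qed
    have all: "\<forall>x1. x1 > 0 \<and> F_quad a b c d x1 = 0 \<longrightarrow>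
         zero_count (W a b c d 3) {- b / (a + 1)<..<x1} = 2 \<and>
         x1 < x_Delta_plus a b c d"
    proof (intro allI impI)
      fix x1 assume h: "x1 > 0 \<and> F_quad a b c d x1 = 0"
      have "F_quad a b c d z < 0 \<longleftrightarrow> z < x1" by (rule F_sign(1)) (use g0 h z(1) in auto)
      hence zx1: "z < x1" using Fz by simp
      have Wy: "poly (W a b c d 3) y > 0"
      proof -
        have "poly (W a b c d 3) y = y*((a*y+b)^2 + (c*y+d)) + (a*y+b)*(c*y+d)" by (rule W3_alt)
        also have "... = y^3" unfolding Ay by (simp add: algebra_simps power2_eq_square power3_eq_cube)
        finally show ?thesis using ypos by simp
      qed
      have Wx1: "poly (W a b c d 3) x1 > 0"
      proof -
        define A where "A = a*x1+b"
        have A: "A < 0" using assms h A_def by (simp add: mult_neg_pos add_neg_neg)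
        have Bx: "c*x1+d = -(A^2)" using h unfolding F_quad_def A_def by simp
        have "poly (W a b c d 3) x1 = x1*((a*x1+b)^2 + (c*x1+d)) + (a*x1+b)*(c*x1+d)" by (rule W3_alt)
        also have "... = -(A*(A*A))" unfolding Bx A_def[symmetric] by (simp add: power2_eq_square)
        moreover have "A*A > 0" using A by (simp add: mult_neg_neg)
        moreover have "A*(A*A) < 0" using A \<open>A*A > 0\<close> by (rule mult_neg_pos)
        ultimately show ?thesis by simp
      qed
      have "zero_count (W a b c d 3) {y<..<x1} = 2"
        by (rule count2[OF assms z(2) yz zx1 ypos Wy Wx1])
      moreover have "x1 < x_Delta_plus a b c d" using xDelta_bound[OF assms(1,2)] h by blast
      ultimately show "zero_count (W a b c d 3) {- b / (a + 1)<..<x1} = 2 \<and>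
         x1 < x_Delta_plus a b c d" using y_def by simp
    qed
    have iv: "c < b / (a + 1) + (a + 1) / b * d"
    proof -
      have zx0: "z < x0" using F_sign(1)[OF g0 x0(1) Fx0, of z] Fz z(1) by simp
      have "F_quad a b c d y < 0" using F_sign(1)[OF g0 x0(1) Fx0, of y] ypos yz zx0 by simp
      hence "y^2 + c*y + d < 0" unfolding F_quad_def Ay by (simp add: power2_eq_square)
      moreover have "y*(b / (a + 1) + (a + 1) / b * d) = -(y^2) - d"
      proof -
        have e1: "b/(a+1) = -y" unfolding y_def by simp
        have e2: "y*(a+1) = -b" unfolding y_def using a1p by simp
        have "y*((a + 1) / b * d) = (y*(a+1))/b*d" by simp
        also have "... = -d" unfolding e2 using assms(2) by simp
        finally show ?thesis unfolding distrib_left e1 by (simp add: power2_eq_square)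
      qed
      ultimately have "y*c < y*(b / (a + 1) + (a + 1) / b * d)" by (simp add: algebra_simps)
      thus ?thesis using mult_less_cancel_left_pos[OF ypos] by blast
    qed
    have v: "c_minus a b d < 0"
    proof -
      define X where "X = d*(a-1)"
      have "X = (-d)*(1-a)" unfolding X_def by (simp add: algebra_simps)
      moreover have "(-d)*(1-a) \<ge> (-d)*1" using assms by (intro mult_left_mono) auto
      ultimately have "X \<ge> -d" by simp
      hence "b^2 < 4*X" using g0 assms(3) by linarith
      moreover have "(-b/2)^2 = b^2/4" by (simp add: power2_eq_square)
      ultimately have "(-b/2)^2 < X" by linarith
      hence "-b/2 < sqrt X" by (rule real_less_rsqrt)
      thus ?thesis unfolding c_minus_def X_def by simp
    qed
    show "a > -1 \<and>
      (\<exists>!x0. x0 > 0 \<and> F_quad a b c d x0 = 0) \<and>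
      (\<forall>x0. x0 > 0 \<and> F_quad a b c d x0 = 0 \<longrightarrow>
         zero_count (W a b c d 3) {- b / (a + 1)<..<x0} = 2 \<and>
         x0 < x_Delta_plus a b c d) \<and>
      c < b / (a + 1) + (a + 1) / b * d \<and>
      c_minus a b d < 0" using a1 ex1 all iv v by blast
  qed
  show ?thesis using P1 P2 by blast
qed

end
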